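(* If $X$ is a set star Hurewicz space and $Y$ is a compact space, then $X \times Y$ is nearly set star Hurewicz.
   Context: For a subset $A$ of a space $X$ and a collection $\mathcal{U}$ of subsets of $X$, ${\rm St}(A,\mathcal{U}) = \bigcup\{U \in \mathcal{U}: U \cap A \neq \emptyset\}$. A space $X$ is set star Hurewicz if for each nonempty $A \subset X$ and each sequence $(\mathcal{U}_n: n\in\mathbb{N})$ of collections of sets open in $X$ with $\overline{A} \subset \bigcup\mathcal{U}_n$ for all $n$, there are finite $\mathcal{V}_n \subset \mathcal{U}_n$ such that each $x \in A$ lies in ${\rm St}(\bigcup\mathcal{V}_n,\mathcal{U}_n)$ for all but finitely many $n$. A space $Z$ is nearly set star Hurewicz if for each nonempty $A \subset Z$ and each sequence $(\mathcal{U}_n: n\in\mathbb{N})$ of open covers of $Z$ there are finite $\mathcal{V}_n \subset \mathcal{U}_n$ such that each $z \in A$ lies in ${\rm St}(\bigcup\mathcal{V}_n,\mathcal{U}_n)$ for all but finitely many $n$. *)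

theory Defs
  imports "HOL-Analysis.Analysis"
begin

definition star :: "'a set \<Rightarrow> 'a set set \<Rightarrow> 'a set" where
  "star A \<U> = \<Union>{U \<in> \<U>. U \<inter> A \<noteq> {}}"

definition set_star_Hurewicz :: "'a topology \<Rightarrow> bool" where
  "set_star_Hurewicz X \<longleftrightarrow>
     (\<forall>A \<U>. A \<noteq> {} \<and> A \<subseteq> topspace X \<and>
        (\<forall>n. (\<forall>U\<in>\<U> n. openin X U) \<and> X closure_of A \<subseteq> \<Union>(\<U> n)) \<longrightarrow>
        (\<exists>\<V>. (\<forall>n. finite (\<V> n) \<and> \<V> n \<subseteq> \<U> n) \<and>
              (\<forall>x\<in>A. eventually (\<lambda>n. x \<in> star (\<Union>(\<V> n)) (\<U> n)) sequentially)))"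

definition nearly_set_star_Hurewicz :: "'a topology \<Rightarrow> bool" where
  "nearly_set_star_Hurewicz Z \<longleftrightarrow>
     (\<forall>A \<U>. A \<noteq> {} \<and> A \<subseteq> topspace Z \<and>
        (\<forall>n. (\<forall>U\<in>\<U> n. openin Z U) \<and> \<Union>(\<U> n) = topspace Z) \<longrightarrow>
        (\<exists>\<V>. (\<forall>n. finite (\<V> n) \<and> \<V> n \<subseteq> \<U> n) \<and>
              (\<forall>z\<in>A. eventually (\<lambda>n. z \<in> star (\<Union>(\<V> n)) (\<U> n)) sequentially)))"

end

theory Submission
  imports Defs
begin

lemma tube_aux:
  assumes Y: "compact_space Y" and x: "x \<in> topspace X"
    and op: "\<forall>U\<in>\<U>. openin (prod_topology X Y) U"
    and cov: "\<Union>\<U> = topspace (prod_topology X Y)"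
  shows "\<exists>W. openin X W \<and> x \<in> W \<and> (\<exists>F. finite F \<and> F \<subseteq> \<U> \<and>
            (\<forall>y\<in>topspace Y. \<exists>U\<in>F. W \<times> {y} \<subseteq> U))"
proof -
  have "\<forall>y\<in>topspace Y. \<exists>p. (\<lambda>(U,Wy,V). U \<in> \<U> \<and> openin X Wy \<and> openin Y V \<and> x \<in> Wy \<and> y \<in> V \<and> Wy \<times> V \<subseteq> U) p"
  proof
    fix y assume y: "y \<in> topspace Y"
    then have "(x,y) \<in> \<Union>\<U>" using cov x by simp
    then obtain U where U: "U \<in> \<U>" "(x,y) \<in> U" by blast
    have oU: "openin (prod_topology X Y) U" using op U(1) by blast
    obtain Wy V where "openin X Wy \<and> openin Y V \<and> x \<in> Wy \<and> y \<in> V \<and> Wy \<times> V \<subseteq> U"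
      using openin_prod_topology_alt[THEN iffD1, rule_format, OF oU U(2)] by blast
    then show "\<exists>p. (\<lambda>(U,Wy,V). U \<in> \<U> \<and> openin X Wy \<and> openin Y V \<and> x \<in> Wy \<and> y \<in> V \<and> Wy \<times> V \<subseteq> U) p"
      using U(1) by (intro exI[of _ "(U,Wy,V)"]) simp
  qed
  from bchoice[OF this] obtain g where g: "\<forall>y\<in>topspace Y. (\<lambda>(U,Wy,V). U \<in> \<U> \<and> openin X Wy \<and> openin Y V \<and> x \<in> Wy \<and> y \<in> V \<and> Wy \<times> V \<subseteq> U) (g y)"
    by blast
  define Uf where "Uf y = fst (g y)" for y
  define Wf where "Wf y = fst (snd (g y))" for y
  define Vf where "Vf y = snd (snd (g y))" for y
  have H: "\<And>y. y \<in> topspace Y \<Longrightarrow> Uf y \<in> \<U> \<and> openin X (Wf y) \<and> openin Y (Vf y)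
      \<and> x \<in> Wf y \<and> y \<in> Vf y \<and> Wf y \<times> Vf y \<subseteq> Uf y"
    using g unfolding Uf_def Wf_def Vf_def by (auto simp: case_prod_beta)
  have "\<exists>\<F>. finite \<F> \<and> \<F> \<subseteq> Vf ` topspace Y \<and> topspace Y \<subseteq> \<Union>\<F>"
    apply (rule compactinD[OF Y[unfolded compact_space_def]])
    using H by auto
  then obtain \<F> where F: "finite \<F>" "\<F> \<subseteq> Vf ` topspace Y" "topspace Y \<subseteq> \<Union>\<F>" by blast
  then obtain T where T: "T \<subseteq> topspace Y" "finite T" "\<F> = Vf ` T"
    by (meson finite_subset_image)
  define W where "W = (\<Inter>i\<in>T. Wf i) \<inter> topspace X"
  have "openin X W" unfolding W_def using T H by (intro openin_INT) auto
  moreover have "x \<in> W" unfolding W_def using T H x by auto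
  moreover have "\<forall>y\<in>topspace Y. \<exists>U\<in>Uf ` T. W \<times> {y} \<subseteq> U"
  proof
    fix y assume "y \<in> topspace Y"
    then obtain t where t: "t \<in> T" "y \<in> Vf t" using F T by auto
    then have "W \<times> {y} \<subseteq> Wf t \<times> Vf t" unfolding W_def by auto
    also have "\<dots> \<subseteq> Uf t" using H t T by auto
    finally show "\<exists>U\<in>Uf ` T. W \<times> {y} \<subseteq> U" using t by blast
  qed
  moreover have "Uf ` T \<subseteq> \<U>" using H T by auto
  ultimately show ?thesis using T(2) by (intro exI[of _ W] conjI exI[of _ "Uf ` T"]) auto
qed

theorem corollary3p16:
  fixes X :: "'a topology" and Y :: "'b topology"
  assumes "set_star_Hurewicz X" and "compact_space Y"
  shows "nearly_set_star_Hurewicz (prod_topology X Y)"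
  unfolding nearly_set_star_Hurewicz_def
proof (intro allI impI, elim conjE)
  fix A :: "('a \<times> 'b) set" and \<U> :: "nat \<Rightarrow> ('a \<times> 'b) set set"
  assume An: "A \<noteq> {}" and AZ: "A \<subseteq> topspace (prod_topology X Y)"
    and UU: "\<forall>n. (\<forall>U\<in>\<U> n. openin (prod_topology X Y) U) \<and> \<Union>(\<U> n) = topspace (prod_topology X Y)"
  define \<W> where "\<W> n = {W. openin X W \<and> (\<exists>F. finite F \<and> F \<subseteq> \<U> n \<and>
            (\<forall>y\<in>topspace Y. \<exists>U\<in>F. W \<times> {y} \<subseteq> U))}" for n
  have cl: "X closure_of (fst ` A) \<subseteq> \<Union>(\<W> n)" for n
  proof
    fix x assume "x \<in> X closure_of (fst ` A)"
    then have "x \<in> topspace X" by (meson closure_of_subset_topspace subsetD)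
    note xt = this
    have o1: "\<forall>U\<in>\<U> n. openin (prod_topology X Y) U" and o2: "\<Union>(\<U> n) = topspace (prod_topology X Y)"
      using UU by auto
    obtain W where W: "openin X W" "x \<in> W" and "\<exists>F. finite F \<and> F \<subseteq> \<U> n \<and>
            (\<forall>y\<in>topspace Y. \<exists>U\<in>F. W \<times> {y} \<subseteq> U)"
      using tube_aux[OF assms(2) xt o1 o2] by blast
    then have "W \<in> \<W> n" unfolding \<W>_def by simp
    then show "x \<in> \<Union>(\<W> n)" using W(2) by blast
  qed
  have "\<exists>\<V>. (\<forall>n. finite (\<V> n) \<and> \<V> n \<subseteq> \<W> n) \<and>
              (\<forall>x\<in>fst ` A. eventually (\<lambda>n. x \<in> star (\<Union>(\<V> n)) (\<W> n)) sequentially)"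
  proof -
    have "fst ` A \<noteq> {} \<and> fst ` A \<subseteq> topspace X \<and>
        (\<forall>n. (\<forall>U\<in>\<W> n. openin X U) \<and> X closure_of (fst ` A) \<subseteq> \<Union>(\<W> n))"
    proof (intro conjI allI ballI)
      show "fst ` A \<noteq> {}" using An by simp
      show "fst ` A \<subseteq> topspace X" using AZ by (auto simp: topspace_prod_topology)
      fix n show "X closure_of (fst ` A) \<subseteq> \<Union>(\<W> n)" by (rule cl)
      fix U assume "U \<in> \<W> n" then show "openin X U" unfolding \<W>_def by blast
    qed
    from set_star_Hurewicz_def[THEN iffD1, OF assms(1), rule_format, OF this] show ?thesis .
  qed
  then obtain \<V>' where V': "\<And>n. finite (\<V>' n)" "\<And>n. \<V>' n \<subseteq> \<W> n"
    and ev: "\<forall>x\<in>fst ` A. eventually (\<lambda>n. x \<in> star (\<Union>(\<V>' n)) (\<W> n)) sequentially" by blast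
  have h: "\<forall>n W. \<exists>F. W \<in> \<V>' n \<longrightarrow> (finite F \<and> F \<subseteq> \<U> n \<and> (\<forall>y\<in>topspace Y. \<exists>U\<in>F. W \<times> {y} \<subseteq> U))"
  proof (intro allI)
    fix n W
    show "\<exists>F. W \<in> \<V>' n \<longrightarrow> (finite F \<and> F \<subseteq> \<U> n \<and> (\<forall>y\<in>topspace Y. \<exists>U\<in>F. W \<times> {y} \<subseteq> U))"
    proof (cases "W \<in> \<V>' n")
      case True
      then have "W \<in> \<W> n" using V'(2) by blast
      then have "\<exists>F. finite F \<and> F \<subseteq> \<U> n \<and> (\<forall>y\<in>topspace Y. \<exists>U\<in>F. W \<times> {y} \<subseteq> U)"
        unfolding \<W>_def by simp
      then show ?thesis by blast
    qed simp
  qed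
  have "\<forall>n. \<exists>f. \<forall>W. W \<in> \<V>' n \<longrightarrow> (finite (f W) \<and> (f W) \<subseteq> \<U> n \<and> (\<forall>y\<in>topspace Y. \<exists>U\<in>f W. W \<times> {y} \<subseteq> U))"
  proof
    fix n
    from h have "\<forall>W. \<exists>F. W \<in> \<V>' n \<longrightarrow> (finite F \<and> F \<subseteq> \<U> n \<and> (\<forall>y\<in>topspace Y. \<exists>U\<in>F. W \<times> {y} \<subseteq> U))" by blast
    from choice[OF this] show "\<exists>f. \<forall>W. W \<in> \<V>' n \<longrightarrow> (finite (f W) \<and> (f W) \<subseteq> \<U> n \<and> (\<forall>y\<in>topspace Y. \<exists>U\<in>f W. W \<times> {y} \<subseteq> U))" .
  qed
  from choice[OF this] obtain Fc where Fc0: "\<forall>n W. W \<in> \<V>' n \<longrightarrow> (finite (Fc n W) \<and> (Fc n W) \<subseteq> \<U> n \<and> (\<forall>y\<in>topspace Y. \<exists>U\<in>Fc n W. W \<times> {y} \<subseteq> U))" by blast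
  have Fc: "\<And>n W. W \<in> \<V>' n \<Longrightarrow> finite (Fc n W) \<and> Fc n W \<subseteq> \<U> n \<and>
      (\<forall>y\<in>topspace Y. \<exists>U\<in>Fc n W. W \<times> {y} \<subseteq> U)" using Fc0 by blast
  define \<V> where "\<V> n = \<Union>(Fc n ` \<V>' n)" for n
  show "\<exists>\<V>. (\<forall>n. finite (\<V> n) \<and> \<V> n \<subseteq> \<U> n) \<and>
              (\<forall>z\<in>A. eventually (\<lambda>n. z \<in> star (\<Union>(\<V> n)) (\<U> n)) sequentially)"
  proof (intro exI conjI allI ballI)
    fix n show "finite (\<V> n)" unfolding \<V>_def using V'(1) Fc by auto
    show "\<V> n \<subseteq> \<U> n" unfolding \<V>_def using Fc by auto
  next
    fix z assume zA: "z \<in> A"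
    obtain x y where z: "z = (x,y)" by (cases z)
    have y: "y \<in> topspace Y" using AZ zA z by auto
    have "x \<in> fst ` A" using zA z by force
    then have e: "eventually (\<lambda>n. x \<in> star (\<Union>(\<V>' n)) (\<W> n)) sequentially" using ev by blast
    show "eventually (\<lambda>n. z \<in> star (\<Union>(\<V> n)) (\<U> n)) sequentially"
    proof (rule eventually_mono[OF e])
      fix n assume "x \<in> star (\<Union>(\<V>' n)) (\<W> n)"
      then obtain W' W p where W': "W' \<in> \<W> n" "x \<in> W'" and W: "W \<in> \<V>' n" "p \<in> W'" "p \<in> W"
        unfolding star_def by blast
      obtain U where U: "U \<in> \<U> n" "W' \<times> {y} \<subseteq> U" using W' y unfolding \<W>_def by blast
      obtain U2 where U2: "U2 \<in> Fc n W" "W \<times> {y} \<subseteq> U2" using Fc[OF W(1)] y by blast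
      have "U2 \<in> \<V> n" unfolding \<V>_def using U2 W by blast
      then have "(p,y) \<in> U \<inter> \<Union>(\<V> n)" using U U2 W by blast
      moreover have "z \<in> U" using U W' z by auto
      ultimately show "z \<in> star (\<Union>(\<V> n)) (\<U> n)" unfolding star_def using U(1) by blast
    qed
  qed
qed

end
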